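(* Let $\mathcal{L}$ be a subspace lattice on a Banach space $X$ over $\mathbb{K}\in\{\mathbb{R},\mathbb{C}\}$ and let $\delta:\mathrm{alg}\mathcal{L}\to\mathrm{alg}\mathcal{L}$ be a weak $(m,n,l)$-Jordan centralizer. Suppose $E,L\in\mathcal{J}(\mathcal{L})$ satisfy $E_-\not\supseteq L$, and let $x\in E$ and $f\in L_-^{\perp}$. Then $x\otimes f\in\mathrm{alg}\mathcal{L}$ and $\big(\delta(x\otimes f)-\lambda(x\otimes f)\big)X\subseteq\mathbb{K}x$, where $\lambda(A):=\frac{1}{m+n+2l}(\lambda_{A+I}-\lambda_A)I$.
   Context: Fixed integers $m,n,l\ge 0$ satisfy $m+l\ge1$ and $n+l\ge1$. A linear map $\delta$ from a unital algebra $\mathcal{A}$ (identity $I$) into itself is a weak $(m,n,l)$-Jordan centralizer if for every $A\in\mathcal{A}$ there is $\lambda_A\in\mathbb{K}$ with $(m+n+l)\delta(A^2)=m\delta(A)A+nA\delta(A)+lA\delta(I)A+\lambda_A I$. A subspace lattice $\mathcal{L}$ on $X$ is a collection of closed subspaces containing $(0)$ and $X$ and closed under arbitrary intersections and closed linear spans; $\mathrm{alg}\mathcal{L}$ is the algebra of bounded operators leaving every member of $\mathcal{L}$ invariant. For $E\in\mathcal{L}$, $E_-=\vee\{F\in\mathcal{L}:F\not\supseteq E\}$; $\mathcal{J}(\mathcal{L})=\{K\in\mathcal{L}:K\ne(0),\ K_-\ne X\}$. For $L\subseteq X$, $L^\perp=\{f\in X^*: f|_L=0\}$. $x\otimes f$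 is the operator $y\mapsto f(y)x$. *)

theory Defs
  imports "HOL-Analysis.Analysis"
begin

text \<open>A Banach space over a scalar field 'k (later restricted to R or C): the carrier type
  'a is a real Banach space (norm, addition, completeness) and sc is a scalar
  multiplication by 'k extending the real one, with homogeneous norm.\<close>
definition scalar_structure :: "('k::real_normed_field \<Rightarrow> 'a::banach \<Rightarrow> 'a) \<Rightarrow> bool" where
  "scalar_structure sc \<longleftrightarrow>
     (\<forall>a x y. sc a (x + y) = sc a x + sc a y) \<and>
     (\<forall>a b x. sc (a + b) x = sc a x + sc b x) \<and>
     (\<forall>a b x. sc a (sc b x) = sc (a * b) x) \<and>
     (\<forall>x. sc 1 x = x) \<and>
     (\<forall>r x. sc (of_real r) x = scaleR r x) \<and>
     (\<forall>a x. norm (sc a x) = norm a * norm x)"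

definition real_or_complex :: "'k::real_normed_field itself \<Rightarrow> bool" where
  "real_or_complex _ \<longleftrightarrow>
     (\<exists>\<phi>::'k \<Rightarrow> complex. inj \<phi> \<and>
        (\<forall>a b. \<phi> (a + b) = \<phi> a + \<phi> b \<and> \<phi> (a * b) = \<phi> a * \<phi> b) \<and>
        (\<forall>r. \<phi> (of_real r) = complex_of_real r) \<and>
        (\<forall>a. norm (\<phi> a) = norm a) \<and>
        (range \<phi> = range complex_of_real \<or> range \<phi> = UNIV))"

definition bounded_op :: "('k::real_normed_field \<Rightarrow> 'a::banach \<Rightarrow> 'a) \<Rightarrow> ('a \<Rightarrow> 'a) \<Rightarrow> bool" where
  "bounded_op sc T \<longleftrightarrow>
     (\<forall>x y. T (x + y) = T x + T y) \<and> (\<forall>a x. T (sc a x) = sc a (T x)) \<and>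
     (\<exists>C. \<forall>x. norm (T x) \<le> C * norm x)"

definition bounded_functional :: "('k::real_normed_field \<Rightarrow> 'a::banach \<Rightarrow> 'a) \<Rightarrow> ('a \<Rightarrow> 'k) \<Rightarrow> bool" where
  "bounded_functional sc f \<longleftrightarrow>
     (\<forall>x y. f (x + y) = f x + f y) \<and> (\<forall>a x. f (sc a x) = a * f x) \<and>
     (\<exists>C. \<forall>x. norm (f x) \<le> C * norm x)"

definition closed_ksubspace :: "('k::real_normed_field \<Rightarrow> 'a::banach \<Rightarrow> 'a) \<Rightarrow> 'a set \<Rightarrow> bool" where
  "closed_ksubspace sc S \<longleftrightarrow>
     0 \<in> S \<and> (\<forall>x\<in>S. \<forall>y\<in>S. x + y \<in> S) \<and> (\<forall>a. \<forall>x\<in>S. sc a x \<in> S) \<and> closed S"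

definition closed_span :: "('k::real_normed_field \<Rightarrow> 'a::banach \<Rightarrow> 'a) \<Rightarrow> 'a set set \<Rightarrow> 'a set" where
  "closed_span sc \<F> = \<Inter> {S. closed_ksubspace sc S \<and> \<Union>\<F> \<subseteq> S}"

definition subspace_lattice :: "('k::real_normed_field \<Rightarrow> 'a::banach \<Rightarrow> 'a) \<Rightarrow> 'a set set \<Rightarrow> bool" where
  "subspace_lattice sc \<L> \<longleftrightarrow>
     (\<forall>E\<in>\<L>. closed_ksubspace sc E) \<and> {0} \<in> \<L> \<and> UNIV \<in> \<L> \<and>
     (\<forall>\<F>. \<F> \<subseteq> \<L> \<longrightarrow> \<Inter>\<F> \<in> \<L> \<and> closed_span sc \<F> \<in> \<L>)"

definition alg :: "('k::real_normed_field \<Rightarrow> 'a::banach \<Rightarrow> 'a) \<Rightarrow> 'a set set \<Rightarrow> ('a \<Rightarrow> 'a) set" where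
  "alg sc \<L> = {T. bounded_op sc T \<and> (\<forall>E\<in>\<L>. T ` E \<subseteq> E)}"

definition lminus :: "('k::real_normed_field \<Rightarrow> 'a::banach \<Rightarrow> 'a) \<Rightarrow> 'a set set \<Rightarrow> 'a set \<Rightarrow> 'a set" where
  "lminus sc \<L> E = closed_span sc {F\<in>\<L>. \<not> E \<subseteq> F}"

definition Jset :: "('k::real_normed_field \<Rightarrow> 'a::banach \<Rightarrow> 'a) \<Rightarrow> 'a set set \<Rightarrow> 'a set set" where
  "Jset sc \<L> = {K\<in>\<L>. K \<noteq> {0} \<and> lminus sc \<L> K \<noteq> UNIV}"

definition annihilator :: "('k::real_normed_field \<Rightarrow> 'a::banach \<Rightarrow> 'a) \<Rightarrow> 'a set \<Rightarrow> ('a \<Rightarrow> 'k) set" where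
  "annihilator sc L = {f. bounded_functional sc f \<and> (\<forall>x\<in>L. f x = 0)}"

definition rank_one :: "('k::real_normed_field \<Rightarrow> 'a::banach \<Rightarrow> 'a) \<Rightarrow> 'a \<Rightarrow> ('a \<Rightarrow> 'k) \<Rightarrow> 'a \<Rightarrow> 'a" where
  "rank_one sc x f = (\<lambda>y. sc (f y) x)"

definition wjc_identity :: "('k::real_normed_field \<Rightarrow> 'a::banach \<Rightarrow> 'a) \<Rightarrow> nat \<Rightarrow> nat \<Rightarrow> nat \<Rightarrow>
    (('a \<Rightarrow> 'a) \<Rightarrow> ('a \<Rightarrow> 'a)) \<Rightarrow> ('a \<Rightarrow> 'a) \<Rightarrow> 'k \<Rightarrow> bool" where
  "wjc_identity sc m n l \<delta> A c \<longleftrightarrow>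
     (\<forall>y. sc (of_nat (m + n + l)) (\<delta> (A \<circ> A) y) =
          sc (of_nat m) (\<delta> A (A y)) + sc (of_nat n) (A (\<delta> A y))
          + sc (of_nat l) (A (\<delta> id (A y))) + sc c y)"

definition weak_jordan_centralizer :: "('k::real_normed_field \<Rightarrow> 'a::banach \<Rightarrow> 'a) \<Rightarrow> 'a set set \<Rightarrow>
    nat \<Rightarrow> nat \<Rightarrow> nat \<Rightarrow> (('a \<Rightarrow> 'a) \<Rightarrow> ('a \<Rightarrow> 'a)) \<Rightarrow> bool" where
  "weak_jordan_centralizer sc \<L> m n l \<delta> \<longleftrightarrow>
     (\<forall>A\<in>alg sc \<L>. \<delta> A \<in> alg sc \<L>) \<and>
     (\<forall>A\<in>alg sc \<L>. \<forall>B\<in>alg sc \<L>. \<delta> (\<lambda>y. A y + B y) = (\<lambda>y. \<delta> A y + \<delta> B y)) \<and>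
     (\<forall>a. \<forall>A\<in>alg sc \<L>. \<delta> (\<lambda>y. sc a (A y)) = (\<lambda>y. sc a (\<delta> A y))) \<and>
     (\<forall>A\<in>alg sc \<L>. \<exists>c. wjc_identity sc m n l \<delta> A c)"

end

theory Submission
  imports Defs
begin

definition graphs :: "('a::real_vector \<Rightarrow> real) \<Rightarrow> ('a \<times> real) set \<Rightarrow> ('a \<times> real) set set" where
 "graphs p G0 = {G. G0 \<subseteq> G \<and> (\<forall>x a b. (x,a)\<in>G \<longrightarrow> (x,b)\<in>G \<longrightarrow> a = b) \<and>
     (\<forall>x a y b. (x,a)\<in>G \<longrightarrow> (y,b)\<in>G \<longrightarrow> (x+y,a+b)\<in>G) \<and> (\<forall>x a r. (x,a)\<in>G \<longrightarrow> (r *\<^sub>R x, r*a)\<in>G) \<and>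
     (\<forall>x a. (x,a)\<in>G \<longrightarrow> a \<le> p x)}"

lemma graphsD:
  assumes "G \<in> graphs p G0"
  shows "G0 \<subseteq> G" "(x,a)\<in>G \<Longrightarrow> (x,b)\<in>G \<Longrightarrow> a = b" "(x,a)\<in>G \<Longrightarrow> (y,b)\<in>G \<Longrightarrow> (x+y,a+b)\<in>G"
    "(x,a)\<in>G \<Longrightarrow> (r *\<^sub>R x, r*a)\<in>G" "(x,a)\<in>G \<Longrightarrow> a \<le> p x"
  using assms unfolding graphs_def by blast+

lemma graphsI:
  assumes "G0 \<subseteq> G" "\<And>x a b. (x,a)\<in>G \<Longrightarrow> (x,b)\<in>G \<Longrightarrow> a = b" "\<And>x a y b. (x,a)\<in>G \<Longrightarrow> (y,b)\<in>G \<Longrightarrow> (x+y,a+b)\<in>G"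
    "\<And>x a r. (x,a)\<in>G \<Longrightarrow> (r *\<^sub>R x, r*a)\<in>G" "\<And>x a. (x,a)\<in>G \<Longrightarrow> a \<le> p x"
  shows "G \<in> graphs p G0"
  using assms unfolding graphs_def by blast

lemma graphs_chain:
  assumes G0: "G0 \<in> graphs p G0"
  shows "\<forall>C\<in>chains (graphs p G0). \<exists>U\<in>graphs p G0. \<forall>X\<in>C. X \<subseteq> U"
proof
  fix C assume C: "C \<in> chains (graphs p G0)"
  then have Cs: "C \<subseteq> graphs p G0" and ch: "\<And>A B. A \<in> C \<Longrightarrow> B \<in> C \<Longrightarrow> A \<subseteq> B \<or> B \<subseteq> A"
    unfolding chains_def chain_subset_def by auto
  show "\<exists>U\<in>graphs p G0. \<forall>X\<in>C. X \<subseteq> U"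
  proof (cases "C = {}")
    case True then show ?thesis using G0 by blast
  next
    case False
    then obtain X0 where X0: "X0 \<in> C" by blast
    have two: "\<exists>X\<in>C. (x,a) \<in> X \<and> (y,b) \<in> X" if a1: "(x,a) \<in> \<Union>C" and a2: "(y,b) \<in> \<Union>C" for x a y b
    proof -
      obtain X1 X2 where "X1 \<in> C" "X2 \<in> C" "(x,a) \<in> X1" "(y,b) \<in> X2" using a1 a2 by blast
      then show ?thesis using ch[of X1 X2] by blast
    qed
    have "\<Union>C \<in> graphs p G0"
    proof (rule graphsI)
      show "G0 \<subseteq> \<Union>C" using X0 Cs graphsD(1) by blast
    next
      fix x a b assume "(x,a) \<in> \<Union>C" "(x,b) \<in> \<Union>C"
      then obtain X where "X \<in> C" "(x,a) \<in> X" "(x,b) \<in> X" using two by blast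
      then show "a = b" using Cs graphsD(2) by blast
    next
      fix x a y b assume "(x,a) \<in> \<Union>C" "(y,b) \<in> \<Union>C"
      then obtain X where "X \<in> C" "(x,a) \<in> X" "(y,b) \<in> X" using two by blast
      then show "(x+y,a+b) \<in> \<Union>C" using Cs graphsD(3) by blast
    next
      fix x a r assume "(x,a) \<in> \<Union>C"
      then obtain X where "X \<in> C" "(x,a) \<in> X" by blast
      then show "(r *\<^sub>R x, r*a) \<in> \<Union>C" using Cs graphsD(4) by blast
    next
      fix x a assume "(x,a) \<in> \<Union>C"
      then obtain X where "X \<in> C" "(x,a) \<in> X" by blast
      then show "a \<le> p x" using Cs graphsD(5) by blast
    qed
    then show ?thesis by blast
  qed
qed


lemma graph_extend:
  assumes padd: "\<And>x y. p (x+y) \<le> p x + p y" and phom: "\<And>x r. r > 0 \<Longrightarrow> p (r *\<^sub>R x) = r * p x"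
    and G: "G \<in> graphs p G0" and ne: "(0,0) \<in> G" and w: "\<forall>a. (w,a) \<notin> G"
  shows "\<exists>G'\<in>graphs p G0. G \<subseteq> G' \<and> G' \<noteq> G"
proof -
  note g = graphsD[OF G]
  define V where "V = {b - p (x - w) | x b. (x,b) \<in> G}"
  define c where "c = Sup V"
  have Vne: "V \<noteq> {}" unfolding V_def using ne by blast
  have key: "b - p (x - w) \<le> p (y + w) - b'" if "(x,b) \<in> G" "(y,b') \<in> G" for x b y b'
  proof -
    have "b + b' \<le> p (x + y)" using g(3)[OF that] g(5) by blast
    also have "\<dots> \<le> p (x - w) + p (y + w)" using padd[of "x - w" "y + w"] by simp
    finally show ?thesis by simp
  qed
  have bdd: "bdd_above V" unfolding V_def bdd_above_def using key[OF _ ne] by auto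
  have cge: "b - p (x - w) \<le> c" if "(x,b) \<in> G" for x b
    unfolding c_def by (rule cSup_upper[OF _ bdd]) (use that V_def in blast)
  have cle: "c \<le> p (y + w) - b'" if "(y,b') \<in> G" for y b'
    unfolding c_def by (rule cSup_least[OF Vne]) (use key[OF _ that] V_def in blast)
  define G' where "G' = {(x + t *\<^sub>R w, a + t * c) | x a t. (x,a) \<in> G}"
  have G'I: "(x + t *\<^sub>R w, a + t * c) \<in> G'" if "(x,a) \<in> G" for x a t
    unfolding G'_def using that by blast
  have sub: "G \<subseteq> G'"
  proof
    fix z assume "z \<in> G"
    then obtain x a where "z = (x,a)" "(x,a) \<in> G" by (cases z) auto
    then show "z \<in> G'" using G'I[of x a 0] by simp
  qed
  have wc: "(w, c) \<in> G'" using G'I[OF ne, of 1] by simp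
  have neq: "G' \<noteq> G" using wc w by blast
  have dom_neg: "(x,a) \<in> G \<Longrightarrow> (y,b) \<in> G \<Longrightarrow> (y - x, b - a) \<in> G" for x a y b
    using g(3)[of y b "(-1) *\<^sub>R x" "(-1) * a"] g(4)[of x a "-1"] by simp
  have "G' \<in> graphs p G0"
  proof (rule graphsI)
    show "G0 \<subseteq> G'" using g(1) sub by blast
  next
    fix z a b assume za: "(z,a) \<in> G'" and zb: "(z,b) \<in> G'"
    obtain x1 a1 t1 where 1: "z = x1 + t1 *\<^sub>R w" "a = a1 + t1 * c" "(x1,a1) \<in> G" using za unfolding G'_def by blast
    obtain x2 a2 t2 where 2: "z = x2 + t2 *\<^sub>R w" "b = a2 + t2 * c" "(x2,a2) \<in> G" using zb unfolding G'_def by blast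
    show "a = b"
    proof (cases "t1 = t2")
      case True
      then have "x1 = x2" using 1(1) 2(1) by simp
      then show ?thesis using 1 2 True g(2) by blast
    next
      case False
      have "(x2 - x1, a2 - a1) \<in> G" by (rule dom_neg[OF 1(3) 2(3)])
      then have "((1 / (t1 - t2)) *\<^sub>R (x2 - x1), (1 / (t1 - t2)) * (a2 - a1)) \<in> G" by (rule g(4))
      moreover have "x2 - x1 = (t1 - t2) *\<^sub>R w" using 1(1) 2(1) by (simp add: algebra_simps)
      ultimately have "(w, (1 / (t1 - t2)) * (a2 - a1)) \<in> G" using False by simp
      then show ?thesis using w by blast
    qed
  next
    fix z a y b assume za: "(z,a) \<in> G'" and yb: "(y,b) \<in> G'"
    obtain x1 a1 t1 where 1: "z = x1 + t1 *\<^sub>R w" "a = a1 + t1 * c" "(x1,a1) \<in> G" using za unfolding G'_def by blast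
    obtain x2 a2 t2 where 2: "y = x2 + t2 *\<^sub>R w" "b = a2 + t2 * c" "(x2,a2) \<in> G" using yb unfolding G'_def by blast
    have "((x1 + x2) + (t1 + t2) *\<^sub>R w, (a1 + a2) + (t1 + t2) * c) \<in> G'" by (rule G'I[OF g(3)[OF 1(3) 2(3)]])
    moreover have "(x1 + x2) + (t1 + t2) *\<^sub>R w = z + y" using 1 2 by (simp add: algebra_simps)
    moreover have "(a1 + a2) + (t1 + t2) * c = a + b" using 1 2 by (simp add: algebra_simps)
    ultimately show "(z + y, a + b) \<in> G'" by simp
  next
    fix z a r assume za: "(z,a) \<in> G'"
    obtain x1 a1 t1 where 1: "z = x1 + t1 *\<^sub>R w" "a = a1 + t1 * c" "(x1,a1) \<in> G" using za unfolding G'_def by blast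
    have "(r *\<^sub>R x1 + (r * t1) *\<^sub>R w, r * a1 + (r * t1) * c) \<in> G'" by (rule G'I[OF g(4)[OF 1(3)]])
    moreover have "r *\<^sub>R x1 + (r * t1) *\<^sub>R w = r *\<^sub>R z" using 1 by (simp add: algebra_simps)
    moreover have "r * a1 + (r * t1) * c = r * a" using 1 by (simp add: algebra_simps)
    ultimately show "(r *\<^sub>R z, r * a) \<in> G'" by simp
  next
    fix z a assume za: "(z,a) \<in> G'"
    obtain x a1 t where 1: "z = x + t *\<^sub>R w" "a = a1 + t * c" "(x,a1) \<in> G" using za unfolding G'_def by blast
    show "a \<le> p z"
    proof (cases t "0::real" rule: linorder_cases)
      case equal then show ?thesis using 1 g(5) by simp
    next
      case greater
      have m: "((1/t) *\<^sub>R x, (1/t) * a1) \<in> G" by (rule g(4)[OF 1(3)])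
      have "c \<le> p ((1/t) *\<^sub>R x + w) - (1/t) * a1" by (rule cle[OF m])
      then have "t * c \<le> t * p ((1/t) *\<^sub>R x + w) - a1" using greater
        by (simp add: field_simps)
      also have "t * p ((1/t) *\<^sub>R x + w) = p (t *\<^sub>R ((1/t) *\<^sub>R x + w))" using phom[OF greater] by simp
      also have "t *\<^sub>R ((1/t) *\<^sub>R x + w) = z" using 1 greater by (simp add: algebra_simps)
      finally show ?thesis using 1 by simp
    next
      case less
      define s where "s = - t"
      have s: "s > 0" using less unfolding s_def by simp
      have m: "((1/s) *\<^sub>R x, (1/s) * a1) \<in> G" by (rule g(4)[OF 1(3)])
      have "(1/s) * a1 - p ((1/s) *\<^sub>R x - w) \<le> c" by (rule cge[OF m])
      then have "a1 - s * p ((1/s) *\<^sub>R x - w) \<le> s * c" using s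
        by (simp add: field_simps)
      moreover have "s * p ((1/s) *\<^sub>R x - w) = p (s *\<^sub>R ((1/s) *\<^sub>R x - w))" using phom[OF s] by simp
      moreover have "s *\<^sub>R ((1/s) *\<^sub>R x - w) = z" using 1 s unfolding s_def by (simp add: algebra_simps)
      ultimately show ?thesis using 1 unfolding s_def by simp
    qed
  qed
  then show ?thesis using sub neq by blast
qed


lemma HB_real:
  assumes padd: "\<And>x y. p (x+y) \<le> p x + p y" and phom: "\<And>x r. r > 0 \<Longrightarrow> p (r *\<^sub>R x) = r * p x"
    and G0: "G0 \<in> graphs p G0" and ne: "(0,0) \<in> G0"
  shows "\<exists>H. (\<forall>x y. H (x+y) = H x + H y) \<and> (\<forall>r x. H (r *\<^sub>R x) = r * H x) \<and> (\<forall>x. H x \<le> p x)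
     \<and> (\<forall>x a. (x,a) \<in> G0 \<longrightarrow> H x = a)"
proof -
  obtain G where G: "G \<in> graphs p G0" and max: "\<forall>X\<in>graphs p G0. G \<subseteq> X \<longrightarrow> X = G"
    using Zorn_Lemma2[OF graphs_chain[OF G0]] by blast
  note g = graphsD[OF G]
  have total: "\<exists>a. (x,a) \<in> G" for x
  proof (rule ccontr)
    assume "\<nexists>a. (x, a) \<in> G"
    then have "\<forall>a. (x,a) \<notin> G" by blast
    from graph_extend[OF padd phom G _ this] ne g(1) max show False by blast
  qed
  define H where "H x = (THE a. (x,a) \<in> G)" for x
  have Hx: "(x, H x) \<in> G" for x
    unfolding H_def by (rule theI') (use total g(2) in blast)
  have Hu: "(x,a) \<in> G \<Longrightarrow> H x = a" for x a using Hx g(2) by blast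
  show ?thesis
  proof (intro exI[of _ H] conjI allI impI)
    show "H (x + y) = H x + H y" for x y by (rule Hu[OF g(3)[OF Hx Hx]])
    show "H (r *\<^sub>R x) = r * H x" for r x by (rule Hu[OF g(4)[OF Hx]])
    show "H x \<le> p x" for x by (rule g(5)[OF Hx])
    show "H x = a" if "(x,a) \<in> G0" for x a using Hu g(1) that by blast
  qed
qed


lemma real_sep:
  fixes M :: "'a::real_normed_vector set"
  assumes M0: "0 \<in> M" and Madd: "\<And>x y. x\<in>M \<Longrightarrow> y\<in>M \<Longrightarrow> x+y \<in> M"
    and Msc: "\<And>r x. x\<in>M \<Longrightarrow> r *\<^sub>R x \<in> M" and Mc: "closed M" and u: "u \<notin> M"
  shows "\<exists>H C. (\<forall>x y. H(x+y) = H x + H y) \<and> (\<forall>r x. H (r *\<^sub>R x) = r * H x) \<and> (\<forall>x. \<bar>H x\<bar> \<le> C * norm x)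
     \<and> (\<forall>x\<in>M. H x = 0) \<and> H u = 1"
proof -
  define d where "d = infdist u M"
  have d: "d > 0" unfolding d_def using infdist_pos_not_in_closed[OF Mc _ u] M0 by blast
  define p where "p z = norm z / d" for z :: 'a
  have padd: "p (x+y) \<le> p x + p y" for x y
    unfolding p_def using norm_triangle_ineq[of x y] d by (simp add: divide_right_mono add_divide_distrib[symmetric])
  have phom: "p (r *\<^sub>R x) = r * p x" if "r > 0" for x r unfolding p_def using that by simp
  define G0 where "G0 = {(m + t *\<^sub>R u, t) | m t. m \<in> M}"
  have G0I: "(m + t *\<^sub>R u, t) \<in> G0" if "m \<in> M" for m t unfolding G0_def using that by blast
  have Mneg: "x \<in> M \<Longrightarrow> y \<in> M \<Longrightarrow> y - x \<in> M" for x y using Madd[of y "(-1) *\<^sub>R x"] Msc[of x "-1"] by simp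
  have dom: "t \<le> p (m + t *\<^sub>R u)" if m: "m \<in> M" for m t
  proof (cases "t > 0")
    case False then show ?thesis unfolding p_def using d by (simp add: not_less order_trans[OF _ divide_nonneg_pos[OF norm_ge_zero d]])
  next
    case True
    have "d \<le> dist u (- ((1/t) *\<^sub>R m))" unfolding d_def by (rule infdist_le) (use Msc[OF m, of "-(1/t)"] in simp)
    also have "\<dots> = norm (u + (1/t) *\<^sub>R m)" by (simp add: dist_norm)
    finally have "t * d \<le> t * norm (u + (1/t) *\<^sub>R m)" using True by simp
    also have "t * norm (u + (1/t) *\<^sub>R m) = norm (t *\<^sub>R (u + (1/t) *\<^sub>R m))" using True by simp
    also have "t *\<^sub>R (u + (1/t) *\<^sub>R m) = m + t *\<^sub>R u" using True by (simp add: algebra_simps)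
    finally show ?thesis unfolding p_def using d by (simp add: field_simps)
  qed
  have G0g: "G0 \<in> graphs p G0"
  proof (rule graphsI)
    fix z a b assume za: "(z,a) \<in> G0" and zb: "(z,b) \<in> G0"
    obtain m1 where 1: "z = m1 + a *\<^sub>R u" "m1 \<in> M" using za unfolding G0_def by blast
    obtain m2 where 2: "z = m2 + b *\<^sub>R u" "m2 \<in> M" using zb unfolding G0_def by blast
    show "a = b"
    proof (rule ccontr)
      assume ab: "a \<noteq> b"
      have "m2 - m1 = (a - b) *\<^sub>R u" using 1 2 by (simp add: algebra_simps)
      then have "(1/(a-b)) *\<^sub>R (m2 - m1) = u" using ab by simp
      moreover have "(1/(a-b)) *\<^sub>R (m2 - m1) \<in> M" using Msc Mneg 1(2) 2(2) by blast
      ultimately show False using u by simp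
    qed
  next
    fix z a y b assume za: "(z,a) \<in> G0" and yb: "(y,b) \<in> G0"
    obtain m1 where 1: "z = m1 + a *\<^sub>R u" "m1 \<in> M" using za unfolding G0_def by blast
    obtain m2 where 2: "y = m2 + b *\<^sub>R u" "m2 \<in> M" using yb unfolding G0_def by blast
    have "(m1 + m2) + (a + b) *\<^sub>R u = z + y" using 1 2 by (simp add: algebra_simps)
    then show "(z + y, a + b) \<in> G0" using G0I[OF Madd[OF 1(2) 2(2)], of "a+b"] by simp
  next
    fix z a r assume za: "(z,a) \<in> G0"
    obtain m1 where 1: "z = m1 + a *\<^sub>R u" "m1 \<in> M" using za unfolding G0_def by blast
    have "r *\<^sub>R m1 + (r * a) *\<^sub>R u = r *\<^sub>R z" using 1 by (simp add: algebra_simps)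
    then show "(r *\<^sub>R z, r * a) \<in> G0" using G0I[OF Msc[OF 1(2), of r], of "r * a"] by simp
  next
    fix z a assume za: "(z,a) \<in> G0"
    then obtain m1 where 1: "z = m1 + a *\<^sub>R u" "m1 \<in> M" unfolding G0_def by blast
    then show "a \<le> p z" using dom by simp
  qed simp
  have ne: "(0,0) \<in> G0" using G0I[OF M0, of 0] by simp
  obtain H where H: "\<forall>x y. H (x+y) = H x + H y" "\<forall>r x. H (r *\<^sub>R x) = r * H x" "\<forall>x. H x \<le> p x"
     "\<forall>x a. (x,a) \<in> G0 \<longrightarrow> H x = a"
    using HB_real[OF padd phom G0g ne] by blast
  have "\<bar>H x\<bar> \<le> (1/d) * norm x" for x
  proof -
    have "H x \<le> norm x / d" using H(3) unfolding p_def by blast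
    moreover have "- H x \<le> norm x / d"
    proof -
      have "H ((-1) *\<^sub>R x) \<le> norm ((-1) *\<^sub>R x) / d" using H(3) unfolding p_def by blast
      moreover have "H ((-1) *\<^sub>R x) = - H x" using H(2)[rule_format, of "-1" x] by simp
      ultimately show ?thesis by simp
    qed
    ultimately show ?thesis by simp
  qed
  moreover have "\<forall>x\<in>M. H x = 0" using H(4) G0I[of _ 0] by simp
  moreover have "H u = 1" using H(4) G0I[OF M0, of 1] by simp
  ultimately show ?thesis using H(1,2) by blast
qed

locale KS =
  fixes sc :: "'k::real_normed_field \<Rightarrow> 'a::banach \<Rightarrow> 'a"
  assumes ss: "scalar_structure sc"
begin

lemma sc_addr: "sc a (x + y) = sc a x + sc a y" using ss unfolding scalar_structure_def by blast
lemma sc_addl: "sc (a + b) x = sc a x + sc b x" using ss unfolding scalar_structure_def by blast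
lemma sc_sc: "sc a (sc b x) = sc (a * b) x" using ss unfolding scalar_structure_def by blast
lemma sc_one: "sc 1 x = x" using ss unfolding scalar_structure_def by blast
lemma sc_real: "sc (of_real r) x = r *\<^sub>R x" using ss unfolding scalar_structure_def by blast
lemma sc_norm: "norm (sc a x) = norm a * norm x" using ss unfolding scalar_structure_def by blast

sublocale M: module sc
  by standard (auto simp: sc_addr sc_addl sc_sc sc_one)

lemma sc_nat: "sc (of_nat k) x = real k *\<^sub>R x"
  using sc_real[of "real k" x] by simp

lemma sc_eq_0_iff: "sc a x = 0 \<longleftrightarrow> a = 0 \<or> x = 0"
  using sc_norm[of a x] by (metis M.scale_zero_left M.scale_zero_right mult_eq_0_iff norm_eq_zero)

lemma sc_cancel: "sc a x = sc b x \<Longrightarrow> x \<noteq> 0 \<Longrightarrow> a = b"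
  by (metis M.scale_left_diff_distrib eq_iff_diff_eq_0 sc_eq_0_iff)


lemma cks_0: "closed_ksubspace sc S \<Longrightarrow> 0 \<in> S" unfolding closed_ksubspace_def by blast
lemma cks_add: "closed_ksubspace sc S \<Longrightarrow> x \<in> S \<Longrightarrow> y \<in> S \<Longrightarrow> x + y \<in> S" unfolding closed_ksubspace_def by blast
lemma cks_sc: "closed_ksubspace sc S \<Longrightarrow> x \<in> S \<Longrightarrow> sc a x \<in> S" unfolding closed_ksubspace_def by blast
lemma cks_closed: "closed_ksubspace sc S \<Longrightarrow> closed S" unfolding closed_ksubspace_def by blast

lemma cs_cks: "closed_ksubspace sc (closed_span sc F)"
  unfolding closed_span_def closed_ksubspace_def
  by (auto intro!: closed_Inter)

lemma cs_sup: "\<Union>F \<subseteq> closed_span sc F"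
  unfolding closed_span_def by blast

lemma lminus_cks: "closed_ksubspace sc (lminus sc L E)"
  unfolding lminus_def by (rule cs_cks)

lemma notsub_minus: "F \<in> L \<Longrightarrow> \<not> E \<subseteq> F \<Longrightarrow> F \<subseteq> lminus sc L E"
  unfolding lminus_def using cs_sup[of "{F \<in> L. \<not> E \<subseteq> F}"] by blast

lemma bf_add: "bounded_functional sc h \<Longrightarrow> h (x + y) = h x + h y" unfolding bounded_functional_def by blast
lemma bf_sc: "bounded_functional sc h \<Longrightarrow> h (sc a x) = a * h x" unfolding bounded_functional_def by blast
lemma bf_bound: "bounded_functional sc h \<Longrightarrow> \<exists>C. \<forall>x. norm (h x) \<le> C * norm x" unfolding bounded_functional_def by (erule conjunct2[THEN conjunct2])
lemma bf_0: "bounded_functional sc h \<Longrightarrow> h 0 = 0"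
  using bf_sc[of h 0 0] by simp

lemma bo_add: "bounded_op sc T \<Longrightarrow> T (x + y) = T x + T y" unfolding bounded_op_def by blast
lemma bo_sc: "bounded_op sc T \<Longrightarrow> T (sc a x) = sc a (T x)" unfolding bounded_op_def by blast
lemma bo_0: "bounded_op sc T \<Longrightarrow> T 0 = 0"
  using bo_sc[of T 0 0] by simp
lemma alg_bo: "T \<in> alg sc L \<Longrightarrow> bounded_op sc T" unfolding alg_def by blast
lemma alg_inv: "T \<in> alg sc L \<Longrightarrow> F \<in> L \<Longrightarrow> x \<in> F \<Longrightarrow> T x \<in> F" unfolding alg_def by blast

lemma rank_one_bo:
  assumes "bounded_functional sc h"
  shows "bounded_op sc (rank_one sc u h)"
proof -
  obtain C where C: "\<And>x. norm (h x) \<le> C * norm x" using bf_bound[OF assms] by blast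
  have "norm (rank_one sc u h x) \<le> (C * norm u) * norm x" for x
  proof -
    have "norm (rank_one sc u h x) = norm (h x) * norm u" by (simp add: rank_one_def sc_norm)
    also have "\<dots> \<le> (C * norm x) * norm u" by (rule mult_right_mono[OF C norm_ge_zero])
    finally show ?thesis by (simp add: algebra_simps)
  qed
  thus ?thesis unfolding bounded_op_def rank_one_def
    using bf_add[OF assms] bf_sc[OF assms] by (auto simp: M.scale_left_distrib)
qed

lemma rank_one_alg:
  assumes lat: "subspace_lattice sc L" and u: "u \<in> E" and h: "h \<in> annihilator sc (lminus sc L K)"
    and sub: "\<forall>F\<in>L. K \<subseteq> F \<longrightarrow> E \<subseteq> F"
  shows "rank_one sc u h \<in> alg sc L"
proof -
  have hb: "bounded_functional sc h" and hz: "\<forall>z\<in>lminus sc L K. h z = 0"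
    using h unfolding annihilator_def by auto
  have cks: "\<And>F. F \<in> L \<Longrightarrow> closed_ksubspace sc F" using lat unfolding subspace_lattice_def by blast
  have "rank_one sc u h y \<in> F" if F: "F \<in> L" and y: "y \<in> F" for F y
  proof (cases "K \<subseteq> F")
    case True
    then have "u \<in> F" using sub F u by blast
    then show ?thesis unfolding rank_one_def by (rule cks_sc[OF cks[OF F]])
  next
    case False
    then have "F \<subseteq> lminus sc L K" by (rule notsub_minus[OF F])
    then have "h y = 0" using hz y by blast
    then show ?thesis unfolding rank_one_def using cks_0[OF cks[OF F]] by simp
  qed
  then show ?thesis unfolding alg_def using rank_one_bo[OF hb] by blast
qed


lemma id_alg: "subspace_lattice sc L \<Longrightarrow> id \<in> alg sc L"
  unfolding alg_def bounded_op_def by (auto intro!: exI[of _ 1])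

lemma alg_add: assumes "A \<in> alg sc L" "B \<in> alg sc L" "subspace_lattice sc L"
  shows "(\<lambda>y. A y + B y) \<in> alg sc L"
proof -
  have a: "bounded_op sc A" and b: "bounded_op sc B" using assms alg_bo by auto
  obtain C1 where C1: "\<And>x. norm (A x) \<le> C1 * norm x" using a unfolding bounded_op_def by blast
  obtain C2 where C2: "\<And>x. norm (B x) \<le> C2 * norm x" using b unfolding bounded_op_def by blast
  have bnd: "norm (A x + B x) \<le> (C1 + C2) * norm x" for x
    using norm_triangle_ineq[of "A x" "B x"] C1[of x] C2[of x] by (simp add: distrib_right)
  have bo: "bounded_op sc (\<lambda>y. A y + B y)"
    unfolding bounded_op_def
    apply (intro conjI allI exI[of _ "C1+C2"])
      apply (simp add: bo_add[OF a] bo_add[OF b] add_ac)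
     apply (simp add: bo_sc[OF a] bo_sc[OF b] M.scale_right_distrib)
    apply (rule bnd)
    done
  have inv: "\<forall>F\<in>L. (\<lambda>y. A y + B y) ` F \<subseteq> F"
  proof (intro ballI subsetI)
    fix F z assume F: "F \<in> L" and "z \<in> (\<lambda>y. A y + B y) ` F"
    then obtain y where y: "y \<in> F" "z = A y + B y" by blast
    have cks: "closed_ksubspace sc F" using assms(3) F unfolding subspace_lattice_def by blast
    show "z \<in> F" using cks_add[OF cks alg_inv[OF assms(1) F y(1)] alg_inv[OF assms(2) F y(1)]] y(2) by simp
  qed
  show ?thesis unfolding alg_def using bo inv by blast
qed

lemma alg_comp: assumes "A \<in> alg sc L" "B \<in> alg sc L"
  shows "(\<lambda>y. A (B y)) \<in> alg sc L"
proof -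
  have a: "bounded_op sc A" and b: "bounded_op sc B" using assms alg_bo by auto
  obtain C1 where C1: "\<And>x. norm (A x) \<le> C1 * norm x" using a unfolding bounded_op_def by blast
  obtain C2 where C2: "\<And>x. norm (B x) \<le> C2 * norm x" using b unfolding bounded_op_def by blast
  have C1': "norm (A z) \<le> max C1 0 * norm z" for z
    using C1[of z] mult_right_mono[OF max.cobounded1[of C1 0] norm_ge_zero[of z]] by linarith
  have C2': "norm (B z) \<le> max C2 0 * norm z" for z
    using C2[of z] mult_right_mono[OF max.cobounded1[of C2 0] norm_ge_zero[of z]] by linarith
  have "norm (A (B x)) \<le> (max C1 0 * max C2 0) * norm x" for x
  proof -
    have "norm (A (B x)) \<le> max C1 0 * norm (B x)" by (rule C1')
    also have "\<dots> \<le> max C1 0 * (max C2 0 * norm x)"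
      by (rule mult_left_mono[OF C2']) simp
    finally show ?thesis by (simp add: mult.assoc)
  qed
  moreover have "bounded_op sc (\<lambda>y. A (B y))"
    using a b calculation unfolding bounded_op_def by auto
  moreover have "\<forall>F\<in>L. (\<lambda>y. A (B y)) ` F \<subseteq> F"
    using assms alg_inv by blast
  ultimately show ?thesis unfolding alg_def by blast
qed

lemma alg_real: "A \<in> alg sc L \<Longrightarrow> A (r *\<^sub>R x) = r *\<^sub>R A x"
  using bo_sc[OF alg_bo, of A L "of_real r" x] by (simp add: sc_real)

end

lemma lincomb_F:
  fixes a1 a2 a3 a4 a5 a6 a7 a8 s0 s1 :: "'v::real_vector" and m n l :: real
  assumes H1: "(m+n+l) *\<^sub>R (a1 + a2 + a2 + a3) = m *\<^sub>R (a4 + a2 + a5 + a3) + n *\<^sub>R (a6 + a7 + a2 + a3)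
     + l *\<^sub>R (a8 + a7 + a5 + a3) + s1"
    and H0: "(m+n+l) *\<^sub>R a1 = m *\<^sub>R a4 + n *\<^sub>R a6 + l *\<^sub>R a8 + s0"
  shows "(m+n+2*l) *\<^sub>R a2 = (m+l) *\<^sub>R a5 + (n+l) *\<^sub>R a7 + (s1 - s0)"
proof -
  define c where "c = m+n+l"
  have H1': "c *\<^sub>R a1 + c *\<^sub>R a2 + c *\<^sub>R a2 + c *\<^sub>R a3 = m *\<^sub>R (a4 + a2 + a5 + a3) + n *\<^sub>R (a6 + a7 + a2 + a3)
     + l *\<^sub>R (a8 + a7 + a5 + a3) + s1" using H1 unfolding c_def[symmetric] by (simp only: scaleR_add_right)
  have H0': "c *\<^sub>R a1 = m *\<^sub>R a4 + n *\<^sub>R a6 + l *\<^sub>R a8 + s0" using H0 unfolding c_def .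
  have "c *\<^sub>R a2 + c *\<^sub>R a2 + c *\<^sub>R a3 = (m+n) *\<^sub>R a2 + (m+l) *\<^sub>R a5 + (n+l) *\<^sub>R a7 + (m+n+l) *\<^sub>R a3 + (s1 - s0)"
    using H1' H0' by (simp add: algebra_simps)
  then have "c *\<^sub>R a2 + c *\<^sub>R a2 - (m+n) *\<^sub>R a2 = (m+l) *\<^sub>R a5 + (n+l) *\<^sub>R a7 + (s1 - s0)"
    unfolding c_def by (simp add: algebra_simps)
  moreover have "c *\<^sub>R a2 + c *\<^sub>R a2 - (m+n) *\<^sub>R a2 = (m+n+2*l) *\<^sub>R a2"
    unfolding c_def by (simp add: scaleR_diff_left[symmetric] scaleR_add_left[symmetric])
  ultimately show ?thesis by simp
qed
lemma lc_fin:
  fixes V1 V2 V3 t2 tB tl :: "'v::real_vector" and P M Nn K c :: real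
  assumes "(M + P) *\<^sub>R V1 + (Nn + P) *\<^sub>R V3 + c *\<^sub>R t2 = M *\<^sub>R V1 + (2*P) *\<^sub>R V2 + Nn *\<^sub>R V3 + tB + K *\<^sub>R tl"
  shows "P *\<^sub>R (V1 + V3 - 2 *\<^sub>R V2) = tB + (K *\<^sub>R tl - c *\<^sub>R t2)"
proof -
  have "P *\<^sub>R (V1 + V3 - 2 *\<^sub>R V2) - (tB + (K *\<^sub>R tl - c *\<^sub>R t2)) =
     ((M + P) *\<^sub>R V1 + (Nn + P) *\<^sub>R V3 + c *\<^sub>R t2) - (M *\<^sub>R V1 + (2*P) *\<^sub>R V2 + Nn *\<^sub>R V3 + tB + K *\<^sub>R tl)"
    by (simp add: scaleR_add_left scaleR_add_right scaleR_diff_right algebra_simps)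
  then show ?thesis using assms by simp
qed
lemma lincomb_Q:
  fixes a1 a4 a6 V1 V2 V3 t2 tB tl :: "'v::real_vector" and m n l :: real
  assumes F2: "(m+n+2*l) *\<^sub>R a1 = (m+l) *\<^sub>R V1 + (n+l) *\<^sub>R V3 + t2"
    and F3: "(m+n+2*l) *\<^sub>R a4 = (m+l) *\<^sub>R V1 + (n+l) *\<^sub>R V2 + tB"
    and F4: "(m+n+2*l) *\<^sub>R a6 = (m+l) *\<^sub>R V2 + (n+l) *\<^sub>R V3 + tB"
    and H: "(m+n+l) *\<^sub>R a1 = m *\<^sub>R a4 + n *\<^sub>R a6 + l *\<^sub>R V2 + tl"
  shows "((m+l)*(n+l)) *\<^sub>R (V1 + V3 - 2 *\<^sub>R V2) = (m+n) *\<^sub>R tB + ((m+n+2*l) *\<^sub>R tl - (m+n+l) *\<^sub>R t2)"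
proof -
  define k where "k = m+n+2*l"
  define N where "N = m+n+l"
  define p where "p = m+l"
  define q where "q = n+l"
  have "k *\<^sub>R ((m+n+l) *\<^sub>R a1) = k *\<^sub>R (m *\<^sub>R a4 + n *\<^sub>R a6 + l *\<^sub>R V2 + tl)" using H by simp
  then have "N *\<^sub>R (k *\<^sub>R a1) = m *\<^sub>R (k *\<^sub>R a4) + n *\<^sub>R (k *\<^sub>R a6) + (k*l) *\<^sub>R V2 + k *\<^sub>R tl"
    unfolding N_def by (simp only: scaleR_add_right scaleR_scaleR mult.commute)
  then have s1: "N *\<^sub>R (p *\<^sub>R V1 + q *\<^sub>R V3 + t2) = m *\<^sub>R (p *\<^sub>R V1 + q *\<^sub>R V2 + tB) + n *\<^sub>R (p *\<^sub>R V2 + q *\<^sub>R V3 + tB) + (k*l) *\<^sub>R V2 + k *\<^sub>R tl"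
    using F2 F3 F4 unfolding k_def p_def q_def by simp
  then have s2: "(N*p) *\<^sub>R V1 + (N*q) *\<^sub>R V3 + N *\<^sub>R t2 = (m*p) *\<^sub>R V1 + (m*q + n*p + k*l) *\<^sub>R V2 + (n*q) *\<^sub>R V3 + (m+n) *\<^sub>R tB + k *\<^sub>R tl"
    by (simp add: scaleR_add_right scaleR_add_left algebra_simps)
  have c1: "N*p = m*p + p*q" and c2: "N*q = n*q + p*q" and c3: "m*q + n*p + k*l = 2*(p*q)"
    unfolding N_def p_def q_def k_def by algebra+
  have "p * q = (m+l)*(n+l)" unfolding p_def q_def ..
  then show ?thesis using lc_fin[OF s2[unfolded c1 c2 c3]] unfolding k_def N_def by simp
qed

locale WJ = KS sc for sc :: "'k::real_normed_field \<Rightarrow> 'a::banach \<Rightarrow> 'a" +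
  fixes L :: "'a set set" and m n l :: nat and \<delta> :: "('a \<Rightarrow> 'a) \<Rightarrow> ('a \<Rightarrow> 'a)"
    and lam :: "('a \<Rightarrow> 'a) \<Rightarrow> 'k"
  assumes lat: "subspace_lattice sc L"
    and wjc: "weak_jordan_centralizer sc L m n l \<delta>"
    and lamid: "\<forall>A\<in>alg sc L. wjc_identity sc m n l \<delta> A (lam A)"
    and ml: "m + l \<ge> 1" and nl: "n + l \<ge> 1"
begin

abbreviation "D \<equiv> \<delta> id"

lemma d_alg: "A \<in> alg sc L \<Longrightarrow> \<delta> A \<in> alg sc L"
  using wjc unfolding weak_jordan_centralizer_def by blast
lemma d_add: "A \<in> alg sc L \<Longrightarrow> B \<in> alg sc L \<Longrightarrow> \<delta> (\<lambda>y. A y + B y) = (\<lambda>y. \<delta> A y + \<delta> B y)"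
  using wjc unfolding weak_jordan_centralizer_def by blast
lemma ident: "A \<in> alg sc L \<Longrightarrow>
  real (m+n+l) *\<^sub>R \<delta> (A \<circ> A) y = real m *\<^sub>R \<delta> A (A y) + real n *\<^sub>R A (\<delta> A y)
          + real l *\<^sub>R A (D (A y)) + sc (lam A) y"
proof -
  assume "A \<in> alg sc L"
  then have "\<forall>y. sc (of_nat (m + n + l)) (\<delta> (A \<circ> A) y) = sc (of_nat m) (\<delta> A (A y)) + sc (of_nat n) (A (\<delta> A y))
          + sc (of_nat l) (A (\<delta> id (A y))) + sc (lam A) y" using lamid unfolding wjc_identity_def by blast
  then show ?thesis by (simp only: sc_nat)
qed

lemma idA: "id \<in> alg sc L" using id_alg[OF lat] .
lemma D_alg: "D \<in> alg sc L" using d_alg[OF idA] .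

lemma lin_add: "A \<in> alg sc L \<Longrightarrow> A (x + y) = A x + A y" using bo_add[OF alg_bo] .

lemma F:
  assumes B: "B \<in> alg sc L"
  shows "(real m + real n + 2 * real l) *\<^sub>R \<delta> B y = (real m + real l) *\<^sub>R D (B y) + (real n + real l) *\<^sub>R B (D y)
          + (sc (lam (\<lambda>z. B z + z)) y - sc (lam B) y)"
proof -
  define B1 where "B1 = (\<lambda>z. B z + z)"
  have B1': "B1 = (\<lambda>z. B z + id z)" unfolding B1_def by simp
  have B1a: "B1 \<in> alg sc L" unfolding B1' by (rule alg_add[OF B idA lat])
  have BB: "B \<circ> B \<in> alg sc L" using alg_comp[OF B B] by (simp add: comp_def)
  have Q: "(\<lambda>y. B y + B y) \<in> alg sc L" by (rule alg_add[OF B B lat])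
  have P: "(\<lambda>y. (B \<circ> B) y + (B y + B y)) \<in> alg sc L" using alg_add[OF BB Q lat] by simp
  have eq: "B1 \<circ> B1 = (\<lambda>y. (\<lambda>y. (B \<circ> B) y + (B y + B y)) y + id y)"
    unfolding B1_def by (auto simp: lin_add[OF B] algebra_simps)
  have dBB: "\<delta> (B1 \<circ> B1) y = \<delta> (B \<circ> B) y + \<delta> B y + \<delta> B y + D y"
    unfolding eq d_add[OF P idA] using d_add[OF BB Q] d_add[OF B B] by (simp add: fun_eq_iff)
  have dB1: "\<delta> B1 z = \<delta> B z + D z" for z unfolding B1' d_add[OF B idA] ..
  have dBa: "\<delta> B \<in> alg sc L" using d_alg[OF B] .
  note H1 = ident[OF B1a, of y] and H0 = ident[OF B, of y]
  have e1: "\<delta> B1 (B1 y) = \<delta> B (B y) + \<delta> B y + D (B y) + D y"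
    using dB1[of "B1 y"] by (simp add: B1_def lin_add[OF dBa] lin_add[OF D_alg])
  have e2: "B1 (\<delta> B1 y) = B (\<delta> B y) + B (D y) + \<delta> B y + D y"
    using dB1[of y] by (simp add: B1_def lin_add[OF B])
  have e3: "B1 (D (B1 y)) = B (D (B y)) + B (D y) + D (B y) + D y"
    unfolding B1_def lin_add[OF D_alg] lin_add[OF B] by simp
  from H1 have H1': "real (m+n+l) *\<^sub>R (\<delta> (B \<circ> B) y + \<delta> B y + \<delta> B y + D y) =
     real m *\<^sub>R (\<delta> B (B y) + \<delta> B y + D (B y) + D y) + real n *\<^sub>R (B (\<delta> B y) + B (D y) + \<delta> B y + D y)
     + real l *\<^sub>R (B (D (B y)) + B (D y) + D (B y) + D y) + sc (lam B1) y"
    by (simp only: dBB e1 e2 e3)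
  show ?thesis using lincomb_F[OF H1'[unfolded of_nat_add] H0[unfolded of_nat_add]] unfolding B1_def .
qed


lemma alg_sc: "A \<in> alg sc L \<Longrightarrow> A (sc a x) = sc a (A x)" using bo_sc[OF alg_bo] .

lemma Q:
  assumes B: "B \<in> alg sc L"
  shows "\<exists>\<alpha> \<nu>. \<forall>y. ((real m + real l) * (real n + real l)) *\<^sub>R (D (B (B y)) + B (B (D y)) - 2 *\<^sub>R B (D (B y)))
     = sc \<alpha> (B y) + sc \<nu> y"
proof -
  have BB: "B \<circ> B \<in> alg sc L" using alg_comp[OF B B] by (simp add: comp_def)
  define \<mu> where "\<mu> = lam (\<lambda>z. B z + z) - lam B"
  define \<mu>2 where "\<mu>2 = lam (\<lambda>z. (B \<circ> B) z + z) - lam (B \<circ> B)"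
  define \<alpha> where "\<alpha> = (of_nat (m+n) :: 'k) * \<mu>"
  define \<nu> where "\<nu> = of_real (real m + real n + 2 * real l) * lam B - of_real (real m + real n + real l) * \<mu>2"
  have "((real m + real l) * (real n + real l)) *\<^sub>R (D (B (B y)) + B (B (D y)) - 2 *\<^sub>R B (D (B y)))
     = sc \<alpha> (B y) + sc \<nu> y" for y
  proof -
    have F2: "(real m + real n + 2 * real l) *\<^sub>R \<delta> (B \<circ> B) y = (real m + real l) *\<^sub>R D (B (B y)) + (real n + real l) *\<^sub>R B (B (D y)) + sc \<mu>2 y"
      using F[OF BB, of y] unfolding \<mu>2_def M.scale_left_diff_distrib by simp
    have F3: "(real m + real n + 2 * real l) *\<^sub>R \<delta> B (B y) = (real m + real l) *\<^sub>R D (B (B y)) + (real n + real l) *\<^sub>R B (D (B y)) + sc \<mu> (B y)"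
      using F[OF B, of "B y"] unfolding \<mu>_def M.scale_left_diff_distrib by simp
    have F4: "(real m + real n + 2 * real l) *\<^sub>R B (\<delta> B y) = (real m + real l) *\<^sub>R B (D (B y)) + (real n + real l) *\<^sub>R B (B (D y)) + sc \<mu> (B y)"
    proof -
      have "B ((real m + real n + 2 * real l) *\<^sub>R \<delta> B y) = B ((real m + real l) *\<^sub>R D (B y) + (real n + real l) *\<^sub>R B (D y) + sc \<mu> y)"
        using F[OF B, of y] unfolding \<mu>_def M.scale_left_diff_distrib by simp
      then show ?thesis by (simp add: alg_real[OF B] lin_add[OF B] alg_sc[OF B])
    qed
    have H: "(real m + real n + real l) *\<^sub>R \<delta> (B \<circ> B) y = real m *\<^sub>R \<delta> B (B y) + real n *\<^sub>R B (\<delta> B y)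
          + real l *\<^sub>R B (D (B y)) + sc (lam B) y"
      using ident[OF B, of y] by simp
    have "sc \<alpha> (B y) = (real m + real n) *\<^sub>R sc \<mu> (B y)"
      unfolding \<alpha>_def M.scale_scale[symmetric] sc_nat by simp
    moreover have "sc \<nu> y = (real m + real n + 2 * real l) *\<^sub>R sc (lam B) y - (real m + real n + real l) *\<^sub>R sc \<mu>2 y"
      unfolding \<nu>_def M.scale_left_diff_distrib M.scale_scale[symmetric] sc_real ..
    ultimately show ?thesis using lincomb_Q[OF F2 F3 F4 H] by simp
  qed
  then show ?thesis by blast
qed

end

context KS begin
lemma sc_solve: "sc c v = sc k u \<Longrightarrow> c \<noteq> 0 \<Longrightarrow> v = sc (k / c) u"
proof -
  assume e: "sc c v = sc k u" and c: "c \<noteq> 0"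
  have "sc (inverse c) (sc c v) = sc (inverse c) (sc k u)" using e by simp
  then show ?thesis using c by (simp add: field_simps)
qed
lemma sc_realR: "r *\<^sub>R v = sc (of_real r) v" by (simp add: sc_real)
end

lemma ag1: fixes a b c d e :: "'v::ab_group_add"
  shows "a + b - c = d + e + e - c - c \<Longrightarrow> a - d = e + e - c - b"
  by (simp add: algebra_simps)

context WJ begin

lemma pq_pos: "(real m + real l) * (real n + real l) > 0"
  using ml nl by (simp add: add_pos_nonneg)

lemma eig1:
  assumes h: "bounded_functional sc h" and B: "rank_one sc u h \<in> alg sc L" and hu: "h u \<noteq> 0"
  shows "\<exists>c. D u = sc c u"
proof -
  define P where "P = (real m + real l) * (real n + real l)"
  have P: "P > 0" unfolding P_def by (rule pq_pos)
  obtain \<alpha> \<nu> where Qe: "\<And>y. P *\<^sub>R (D (rank_one sc u h (rank_one sc u h y)) + rank_one sc u h (rank_one sc u h (D y))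
     - 2 *\<^sub>R rank_one sc u h (D (rank_one sc u h y))) = sc \<alpha> (rank_one sc u h y) + sc \<nu> y"
    using Q[OF B] unfolding P_def by blast
  define \<beta> where "\<beta> = h u"
  define \<gamma> where "\<gamma> = h (D u)"
  have r1: "rank_one sc u h u = sc \<beta> u" unfolding rank_one_def \<beta>_def ..
  have r2: "rank_one sc u h (sc a u) = sc (a * \<beta>) u" for a unfolding rank_one_def \<beta>_def bf_sc[OF h] ..
  have r3: "rank_one sc u h (sc a (D u)) = sc (a * \<gamma>) u" for a unfolding rank_one_def \<gamma>_def bf_sc[OF h] ..
  have r4: "rank_one sc u h (D u) = sc \<gamma> u" unfolding rank_one_def \<gamma>_def ..
  have Ds: "D (sc a v) = sc a (D v)" for a v by (rule alg_sc[OF D_alg])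
  have "P *\<^sub>R (sc (\<beta> * \<beta>) (D u) + sc (\<gamma> * \<beta>) u - 2 *\<^sub>R sc (\<beta> * \<gamma>) u) = sc \<alpha> (sc \<beta> u) + sc \<nu> u"
    using Qe[of u] unfolding r1 r2 r4 Ds r3 .
  moreover have "sc (\<beta> * \<gamma>) u = sc (\<gamma> * \<beta>) u" by (simp add: mult.commute)
  moreover have "X + Y - 2 *\<^sub>R Y = X - Y" for X Y :: 'a by (simp add: scaleR_2)
  ultimately have "P *\<^sub>R (sc (\<beta> * \<beta>) (D u) - sc (\<gamma> * \<beta>) u) = sc \<alpha> (sc \<beta> u) + sc \<nu> u" by simp
  then have "P *\<^sub>R sc (\<beta> * \<beta>) (D u) = sc \<alpha> (sc \<beta> u) + sc \<nu> u + P *\<^sub>R sc (\<gamma> * \<beta>) u"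
    by (simp add: scaleR_diff_right diff_eq_eq)
  then have "sc (of_real P * (\<beta> * \<beta>)) (D u) = sc (\<alpha> * \<beta> + \<nu> + of_real P * (\<gamma> * \<beta>)) u"
    unfolding sc_realR M.scale_scale M.scale_left_distrib .
  moreover have "of_real P * (\<beta> * \<beta>) \<noteq> 0" using P hu unfolding \<beta>_def by simp
  ultimately show ?thesis using sc_solve by blast
qed


lemma eigR:
  assumes Sadd: "\<forall>a\<in>S. \<forall>b\<in>S. a + b \<in> S" and h: "bounded_functional sc h"
    and ro: "\<forall>u\<in>S. rank_one sc u h \<in> alg sc L" and x': "x' \<in> S" "h x' \<noteq> 0" and x: "x \<in> S"
  shows "\<exists>c. D x = sc c x"
proof (cases "h x = 0")
  case False then show ?thesis using eig1[OF h ro[rule_format, OF x]] by blast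
next
  case True
  have s1: "x + x' \<in> S" using Sadd x x' by blast
  have s2: "x + (x' + x') \<in> S" using Sadd x x' by blast
  have h1: "h (x + x') \<noteq> 0" using True x'(2) bf_add[OF h] by simp
  have h2: "h (x + (x' + x')) \<noteq> 0" using True x'(2) bf_add[OF h] by simp
  obtain c0 where c0: "D x' = sc c0 x'" using eig1[OF h ro[rule_format, OF x'(1)] x'(2)] by blast
  obtain c1 where c1: "D (x + x') = sc c1 (x + x')" using eig1[OF h ro[rule_format, OF s1] h1] by blast
  obtain c2 where c2: "D (x + (x' + x')) = sc c2 (x + (x' + x'))" using eig1[OF h ro[rule_format, OF s2] h2] by blast
  have Dadd: "D (a + b) = D a + D b" for a b by (rule lin_add[OF D_alg])
  have e1: "D x = sc c1 x + sc c1 x' - sc c0 x'" using c1 c0 unfolding Dadd M.scale_right_distrib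
    by (simp add: eq_diff_eq)
  have e2: "D x = sc c2 x + sc c2 x' + sc c2 x' - sc c0 x' - sc c0 x'" using c2 c0 unfolding Dadd M.scale_right_distrib
    by (simp add: eq_diff_eq add.assoc)
  have x'0: "x' \<noteq> 0" using x'(2) bf_0[OF h] by auto
  have eq: "sc (c1 - c2) x = sc (2*c2 - c0 - c1) x'"
  proof -
    have "sc c1 x + sc c1 x' - sc c0 x' = sc c2 x + sc c2 x' + sc c2 x' - sc c0 x' - sc c0 x'" using e1 e2 by simp
    then have "sc c1 x - sc c2 x = sc c2 x' + sc c2 x' - sc c0 x' - sc c1 x'" by (rule ag1)
    then show ?thesis unfolding mult_2 M.scale_left_diff_distrib M.scale_left_distrib .
  qed
  show ?thesis
  proof (cases "c1 = c2")
    case True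
    then have "sc (2*c2 - c0 - c1) x' = 0" using eq by simp
    then have "2*c2 - c0 - c1 = 0" using x'0 sc_eq_0_iff by blast
    then have "c0 = c1" using True by simp
    then have "D x = sc c1 x" using e1 by simp
    then show ?thesis by blast
  next
    case False
    then have "c1 - c2 \<noteq> 0" by simp
    then have xe: "x = sc ((2*c2 - c0 - c1) / (c1 - c2)) x'" using sc_solve[OF eq] by blast
    have "D x = sc c0 x" unfolding xe alg_sc[OF D_alg] c0 by (simp add: mult.commute)
    then show ?thesis by blast
  qed
qed


lemma hardcase:
  assumes f: "bounded_functional sc f" and g: "bounded_functional sc g"
    and C: "rank_one sc x g \<in> alg sc L" and Y: "rank_one sc y f \<in> alg sc L"
    and gx: "g x = 0" and gDx: "g (D x) = 0" and gy: "g y = 1"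
    and fx: "f x = 0" and fDx: "f (D x) = 0" and fy: "f y = 0" and fDy: "f (D y) = 0"
    and x0: "x \<noteq> 0" and z0: "f z0 \<noteq> 0"
  shows "\<exists>c. D x = sc c x"
proof -
  define B where "B = (\<lambda>z. rank_one sc x g z + rank_one sc y f z)"
  have Ba: "B \<in> alg sc L" unfolding B_def by (rule alg_add[OF C Y lat])
  define P where "P = (real m + real l) * (real n + real l)"
  have P: "P > 0" unfolding P_def by (rule pq_pos)
  obtain \<alpha> \<nu> where Qe: "\<And>z. P *\<^sub>R (D (B (B z)) + B (B (D z)) - 2 *\<^sub>R B (D (B z))) = sc \<alpha> (B z) + sc \<nu> z"
    using Q[OF Ba] unfolding P_def by blast
  have Bz: "B z = sc (g z) x + sc (f z) y" for z unfolding B_def rank_one_def ..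
  have gB: "g (B z) = f z" for z unfolding Bz bf_add[OF g] bf_sc[OF g] gx gy by simp
  have fB: "f (B z) = 0" for z unfolding Bz bf_add[OF f] bf_sc[OF f] fx fy by simp
  have BB: "B (B z) = sc (f z) x" for z unfolding Bz[of "B z"] gB fB by simp
  have Ds: "D (sc a v) = sc a (D v)" for a v by (rule alg_sc[OF D_alg])
  have Dadd: "D (a + b) = D a + D b" for a b by (rule lin_add[OF D_alg])
  have DB: "D (B z) = sc (g z) (D x) + sc (f z) (D y)" for z unfolding Bz Dadd Ds ..
  have BDB: "B (D (B z)) = sc (f z * g (D y)) x" for z
  proof -
    have "g (D (B z)) = f z * g (D y)" unfolding DB bf_add[OF g] bf_sc[OF g] gDx by simp
    moreover have "f (D (B z)) = 0" unfolding DB bf_add[OF f] bf_sc[OF f] fDx fDy by simp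
    ultimately show ?thesis unfolding Bz[of "D (B z)"] by simp
  qed
  have main: "P *\<^sub>R (sc (f z) (D x) + sc (f (D z)) x - 2 *\<^sub>R sc (f z * g (D y)) x) = sc \<alpha> (B z) + sc \<nu> z" for z
    using Qe[of z] unfolding BB BDB Ds .
  have "sc \<nu> x = 0" using main[of x] unfolding Bz fx gx fDx by simp
  then have \<nu>: "\<nu> = 0" using x0 sc_eq_0_iff by blast
  have "sc \<alpha> x = 0" using main[of y] unfolding Bz fy gy fDy \<nu> by simp
  then have \<alpha>: "\<alpha> = 0" using x0 sc_eq_0_iff by blast
  have "P *\<^sub>R (sc (f z0) (D x) + sc (f (D z0)) x - 2 *\<^sub>R sc (f z0 * g (D y)) x) = 0"
    using main[of z0] unfolding \<alpha> \<nu> by simp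
  then have "sc (f z0) (D x) + sc (f (D z0)) x - 2 *\<^sub>R sc (f z0 * g (D y)) x = 0" using P by simp
  then have "sc (f z0) (D x) = 2 *\<^sub>R sc (f z0 * g (D y)) x - sc (f (D z0)) x"
    by (simp add: algebra_simps)
  also have "\<dots> = sc (2 * (f z0 * g (D y)) - f (D z0)) x"
    unfolding sc_realR M.scale_scale M.scale_left_diff_distrib by simp
  finally show ?thesis using sc_solve z0 by blast
qed

end

context WJ begin

lemma main_part:
  assumes sep: "\<And>M u. closed_ksubspace sc M \<Longrightarrow> u \<notin> M \<Longrightarrow> (\<exists>g. bounded_functional sc g \<and> (\<forall>z\<in>M. g z = 0) \<and> g u = 1)"
    and E: "E \<in> Jset sc L" and K: "K \<in> Jset sc L"
    and nsub: "\<not> K \<subseteq> lminus sc L E" and x: "x \<in> E" and f: "f \<in> annihilator sc (lminus sc L K)"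
  shows "rank_one sc x f \<in> alg sc L \<and>
         (\<forall>y. \<exists>c. \<delta> (rank_one sc x f) y
                    - sc ((lam (\<lambda>z. rank_one sc x f z + z) - lam (rank_one sc x f))
                          / of_nat (m + n + 2 * l)) y
                  = sc c x)"
proof -
  have EL: "E \<in> L" and KL: "K \<in> L" using E K unfolding Jset_def by auto
  have cks: "\<And>F. F \<in> L \<Longrightarrow> closed_ksubspace sc F" using lat unfolding subspace_lattice_def by blast
  have sub: "\<forall>F\<in>L. K \<subseteq> F \<longrightarrow> E \<subseteq> F"
  proof (intro ballI impI)
    fix F assume F: "F \<in> L" and KF: "K \<subseteq> F"
    show "E \<subseteq> F"
    proof (rule ccontr)
      assume "\<not> E \<subseteq> F"
      then have "F \<subseteq> lminus sc L E" by (rule notsub_minus[OF F])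
      then show False using KF nsub by blast
    qed
  qed
  define A where "A = rank_one sc x f"
  have Aa: "A \<in> alg sc L" unfolding A_def by (rule rank_one_alg[OF lat x f sub])
  have EK: "E \<subseteq> K" using sub KL by blast
  have fb: "bounded_functional sc f" and fK: "\<forall>z\<in>lminus sc L K. f z = 0" using f unfolding annihilator_def by auto
  have Dx: "(\<forall>z. f z = 0) \<or> (\<exists>c. D x = sc c x)"
  proof (cases "\<forall>z. f z = 0")
    case True then show ?thesis by blast
  next
    case False
    then obtain z0 where z0: "f z0 \<noteq> 0" by blast
    show ?thesis
    proof (cases "\<exists>u\<in>K. f u \<noteq> 0")
      case True
      then obtain u where u: "u \<in> K" "f u \<noteq> 0" by blast
      have Kadd: "\<forall>a\<in>K. \<forall>b\<in>K. a + b \<in> K" using cks_add[OF cks[OF KL]] by blast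
      have ro: "\<forall>v\<in>K. rank_one sc v f \<in> alg sc L" using rank_one_alg[OF lat _ f] by blast
      show ?thesis using eigR[OF Kadd fb ro u] x EK by blast
    next
      case False
      then have fK0: "\<forall>u\<in>K. f u = 0" by blast
      show ?thesis
      proof (cases "E \<subseteq> lminus sc L E")
        case False
        then obtain u where u: "u \<in> E" "u \<notin> lminus sc L E" by blast
        obtain g where g: "bounded_functional sc g" "\<forall>z\<in>lminus sc L E. g z = 0" "g u = 1"
          using sep[OF lminus_cks u(2)] by blast
        have gan: "g \<in> annihilator sc (lminus sc L E)" unfolding annihilator_def using g by blast
        have Eadd: "\<forall>a\<in>E. \<forall>b\<in>E. a + b \<in> E" using cks_add[OF cks[OF EL]] by blast
        have ro: "\<forall>v\<in>E. rank_one sc v g \<in> alg sc L" using rank_one_alg[OF lat _ gan] by blast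
        show ?thesis using eigR[OF Eadd g(1) ro u(1)] x g(3) by simp
      next
        case True
        obtain y where y: "y \<in> K" "y \<notin> lminus sc L E" using nsub by blast
        obtain g where g: "bounded_functional sc g" "\<forall>z\<in>lminus sc L E. g z = 0" "g y = 1"
          using sep[OF lminus_cks y(2)] by blast
        have gan: "g \<in> annihilator sc (lminus sc L E)" unfolding annihilator_def using g by blast
        show ?thesis
        proof (cases "x = 0")
          case True
          then have "D x = sc 0 x" using bo_0[OF alg_bo[OF D_alg]] by simp
          then show ?thesis by blast
        next
          case False
          have C: "rank_one sc x g \<in> alg sc L" using rank_one_alg[OF lat x gan] by blast
          have Y: "rank_one sc y f \<in> alg sc L" using rank_one_alg[OF lat y(1) f] by blast
          have DxE: "D x \<in> E" using alg_inv[OF D_alg EL x] .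
          have DyK: "D y \<in> K" using alg_inv[OF D_alg KL y(1)] .
          show ?thesis
            by (rule disjI2, rule hardcase[OF fb g(1) C Y _ _ g(3) _ _ _ _ False z0])
              (use g(2) True x DxE fK0 EK y(1) DyK in blast)+
        qed
      qed
    qed
  qed
  have res: "\<exists>c. \<delta> A y - sc ((lam (\<lambda>z. A z + z) - lam A) / of_nat (m + n + 2 * l)) y = sc c x" for y
  proof -
    have DA: "\<exists>c. D (A y) = sc c x"
    proof -
      have Ay: "A y = sc (f y) x" unfolding A_def rank_one_def ..
      from Dx show ?thesis
      proof
        assume "\<forall>z. f z = 0"
        then have "D (A y) = sc 0 x" unfolding Ay using bo_0[OF alg_bo[OF D_alg]] by simp
        then show ?thesis by blast
      next
        assume "\<exists>c. D x = sc c x"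
        then obtain c where "D x = sc c x" by blast
        then have "D (A y) = sc (f y * c) x" unfolding Ay alg_sc[OF D_alg] by simp
        then show ?thesis by blast
      qed
    qed
    then obtain c where c: "D (A y) = sc c x" by blast
    have ADy: "A (D y) = sc (f (D y)) x" unfolding A_def rank_one_def ..
    define kk where "kk = (of_nat (m + n + 2 * l) :: 'k)"
    define \<mu> where "\<mu> = lam (\<lambda>z. A z + z) - lam A"
    have "m + n + 2 * l \<noteq> 0" using ml by linarith
    then have kk0: "kk \<noteq> 0" unfolding kk_def by (metis of_nat_eq_0_iff)
    have "(real m + real n + 2 * real l) *\<^sub>R \<delta> A y = (real m + real l) *\<^sub>R sc c x + (real n + real l) *\<^sub>R sc (f (D y)) x + sc \<mu> y"
      using F[OF Aa, of y] unfolding c ADy \<mu>_def M.scale_left_diff_distrib .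
    then have "sc kk (\<delta> A y) = sc ((of_real (real m + real l)) * c + of_real (real n + real l) * f (D y)) x + sc \<mu> y"
      unfolding sc_realR M.scale_scale M.scale_left_distrib kk_def by simp
    then have "\<delta> A y = sc (inverse kk) (sc ((of_real (real m + real l)) * c + of_real (real n + real l) * f (D y)) x + sc \<mu> y)"
      using kk0 by (metis M.scale_scale M.scale_one left_inverse)
    then have "\<delta> A y - sc (\<mu> / kk) y = sc (inverse kk * ((of_real (real m + real l)) * c + of_real (real n + real l) * f (D y))) x"
      unfolding M.scale_right_distrib M.scale_scale by (simp add: divide_inverse mult.commute)
    then show ?thesis unfolding \<mu>_def kk_def by blast
  qed
  show ?thesis using Aa res unfolding A_def by blast
qed

end

context KS begin

lemma sepK:
  assumes rc: "real_or_complex TYPE('k)" and M: "closed_ksubspace sc M" and u: "u \<notin> M"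
  shows "\<exists>g. bounded_functional sc g \<and> (\<forall>z\<in>M. g z = 0) \<and> g u = 1"
proof -
  have Msc: "x \<in> M \<Longrightarrow> sc a x \<in> M" for a x using cks_sc[OF M] .
  obtain H C where H: "\<forall>x y. H(x+y) = H x + H y" "\<forall>r x. H (r *\<^sub>R x) = r * H x" "\<forall>x. \<bar>H x\<bar> \<le> C * norm x"
     "\<forall>x\<in>M. H x = 0" "H u = 1"
  proof -
    have Ms: "x \<in> M \<Longrightarrow> r *\<^sub>R x \<in> M" for r x using Msc[of x "of_real r"] unfolding sc_real .
    show ?thesis using real_sep[of M u, OF cks_0[OF M] cks_add[OF M] Ms cks_closed[OF M] u] that by blast
  qed
  obtain \<phi> :: "'k \<Rightarrow> complex" where inj: "inj \<phi>" and hom: "\<And>a b. \<phi> (a + b) = \<phi> a + \<phi> b \<and> \<phi> (a * b) = \<phi> a * \<phi> b"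
    and phr: "\<And>r. \<phi> (of_real r) = complex_of_real r" and phn: "\<And>a. norm (\<phi> a) = norm a"
    and rng: "range \<phi> = range complex_of_real \<or> range \<phi> = UNIV"
    using rc unfolding real_or_complex_def by blast
  have Hsc_real: "H (sc (of_real r) x) = r * H x" for r x using H(2) unfolding sc_real by blast
  from rng show ?thesis
  proof
    assume R: "range \<phi> = range complex_of_real"
    have isr: "\<exists>r. a = of_real r" for a :: 'k
    proof -
      have "\<phi> a \<in> range complex_of_real" using R by blast
      then obtain r where "\<phi> a = complex_of_real r" by blast
      then have "\<phi> a = \<phi> (of_real r)" using phr by simp
      then show ?thesis using inj unfolding inj_def by blast
    qed
    define g where "g z = (of_real (H z) :: 'k)" for z
    have "bounded_functional sc g"
      unfolding bounded_functional_def
    proof (intro conjI allI exI[of _ C])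
      show "g (x + y) = g x + g y" for x y unfolding g_def using H(1) by simp
      show "g (sc a x) = a * g x" for a x
      proof -
        obtain r where a: "a = of_real r" using isr by blast
        show ?thesis unfolding g_def a Hsc_real by simp
      qed
      show "norm (g x) \<le> C * norm x" for x unfolding g_def using H(3) by simp
    qed
    moreover have "\<forall>z\<in>M. g z = 0" unfolding g_def using H(4) by simp
    moreover have "g u = 1" unfolding g_def using H(5) by simp
    ultimately show ?thesis by blast
  next
    assume "range \<phi> = UNIV"
    then obtain ik where ik: "\<phi> ik = \<i>" by (metis UNIV_I image_iff)
    have phm1: "\<phi> (-1) = -1" using phr[of "-1"] by simp
    have ik2: "ik * ik = -1"
    proof -
      have "\<phi> (ik * ik) = \<phi> (-1)" using hom ik phm1 by simp
      then show ?thesis using inj unfolding inj_def by blast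
    qed
    have nik: "norm ik = 1" using phn[of ik] ik by simp
    have dec: "a = of_real (Re (\<phi> a)) + ik * of_real (Im (\<phi> a))" for a :: 'k
    proof -
      have "\<phi> (of_real (Re (\<phi> a)) + ik * of_real (Im (\<phi> a))) = \<phi> a"
        using hom phr ik by (simp add: complex_eq[symmetric] mult.commute)
      then show ?thesis using inj unfolding inj_def by metis
    qed
    define g0 where "g0 z = (of_real (H z) :: 'k) - ik * of_real (H (sc ik z))" for z
    have g0add: "g0 (x + y) = g0 x + g0 y" for x y unfolding g0_def sc_addr using H(1) by (simp add: algebra_simps)
    have scr: "sc ik (sc (of_real r) z) = sc (of_real r) (sc ik z)" for r z unfolding sc_sc by (simp add: mult.commute)
    have g0r: "g0 (sc (of_real r) z) = of_real r * g0 z" for r z unfolding g0_def scr Hsc_real by (simp add: algebra_simps)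
    have g0i: "g0 (sc ik z) = ik * g0 z" for z
    proof -
      have "H (sc ik (sc ik z)) = - H z"
      proof -
        have "sc ik (sc ik z) = sc (of_real (-1)) z" unfolding sc_sc ik2 by simp
        then show ?thesis using Hsc_real[of "-1" z] by simp
      qed
      then have "g0 (sc ik z) = of_real (H (sc ik z)) + ik * of_real (H z)" unfolding g0_def by simp
      also have "\<dots> = ik * g0 z" unfolding g0_def by (simp add: algebra_simps ik2 mult.assoc[symmetric])
      finally show ?thesis .
    qed
    have g0sc: "g0 (sc a z) = a * g0 z" for a :: 'k and z
    proof -
      define s t where "s = Re (\<phi> a)" and "t = Im (\<phi> a)"
      have a: "a = of_real s + ik * of_real t" unfolding s_def t_def by (rule dec)
      have "sc a z = sc (of_real s) z + sc ik (sc (of_real t) z)" unfolding a sc_addl sc_sc ..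
      then have "g0 (sc a z) = of_real s * g0 z + ik * (of_real t * g0 z)" by (simp only: g0add g0r g0i)
      then show ?thesis unfolding a by (simp add: algebra_simps)
    qed
    define \<gamma> where "\<gamma> = g0 u"
    have \<gamma>0: "\<gamma> \<noteq> 0"
    proof
      assume "\<gamma> = 0"
      then have "\<phi> (of_real 1) = \<phi> (ik * of_real (H (sc ik u)))" unfolding \<gamma>_def g0_def H(5) by simp
      moreover have "\<phi> 1 = 1" using phr[of 1] by simp
      ultimately have "1 = \<i> * complex_of_real (H (sc ik u))" using hom phr ik by simp
      then have "Re 1 = Re (\<i> * complex_of_real (H (sc ik u)))" by simp
      then show False by simp
    qed
    define g where "g z = g0 z / \<gamma>" for z
    have "bounded_functional sc g"
      unfolding bounded_functional_def
    proof (intro conjI allI exI[of _ "2 * C / norm \<gamma>"])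
      show "g (x + y) = g x + g y" for x y unfolding g_def g0add by (simp add: add_divide_distrib)
      show "g (sc a x) = a * g x" for a x unfolding g_def g0sc by simp
      show "norm (g x) \<le> 2 * C / norm \<gamma> * norm x" for x
      proof -
        have "norm (g0 x) \<le> norm (of_real (H x) :: 'k) + norm (ik * of_real (H (sc ik x)))"
          unfolding g0_def by (rule norm_triangle_ineq4)
        also have "\<dots> = \<bar>H x\<bar> + \<bar>H (sc ik x)\<bar>" by (simp add: nik norm_mult)
        also have "\<dots> \<le> C * norm x + C * norm (sc ik x)" using H(3) by (meson add_mono)
        also have "\<dots> = 2 * C * norm x" unfolding sc_norm nik by simp
        finally have "norm (g0 x) \<le> 2 * C * norm x" .
        then show ?thesis unfolding g_def norm_divide using \<gamma>0 by (simp add: divide_right_mono field_simps)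
      qed
    qed
    moreover have "\<forall>z\<in>M. g z = 0" unfolding g_def g0_def using H(4) Msc by simp
    moreover have "g u = 1" unfolding g_def \<gamma>_def using \<gamma>0 \<gamma>_def by simp
    ultimately show ?thesis by blast
  qed
qed

end

theorem lemma2p10:
  fixes sc :: "'k::real_normed_field \<Rightarrow> 'a::banach \<Rightarrow> 'a"
    and \<L> :: "'a set set"
    and m n l :: nat
    and \<delta> :: "('a \<Rightarrow> 'a) \<Rightarrow> ('a \<Rightarrow> 'a)"
    and lam :: "('a \<Rightarrow> 'a) \<Rightarrow> 'k"
    and E L :: "'a set"
    and x :: 'a
    and f :: "'a \<Rightarrow> 'k"
  assumes "real_or_complex TYPE('k)"
    and "scalar_structure sc"
    and "m + l \<ge> 1" and "n + l \<ge> 1"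
    and "subspace_lattice sc \<L>"
    and "weak_jordan_centralizer sc \<L> m n l \<delta>"
    and "\<forall>A\<in>alg sc \<L>. wjc_identity sc m n l \<delta> A (lam A)"
    and "E \<in> Jset sc \<L>" and "L \<in> Jset sc \<L>"
    and "\<not> L \<subseteq> lminus sc \<L> E"
    and "x \<in> E"
    and "f \<in> annihilator sc (lminus sc \<L> L)"
  shows "rank_one sc x f \<in> alg sc \<L> \<and>
         (\<forall>y. \<exists>c. \<delta> (rank_one sc x f) y
                    - sc ((lam (\<lambda>z. rank_one sc x f z + z) - lam (rank_one sc x f))
                          / of_nat (m + n + 2 * l)) y
                  = sc c x)"
proof -
  interpret WJ sc "\<L>" m n l \<delta> lam
    by (unfold_locales) (use assms in auto)
  show ?thesis by (rule main_part[OF sepK[OF assms(1)] assms(8,9,10,11,12)])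
qed

end
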